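(* For every integer $n>1$ there exists a triharmonic curve with nonconstant curvature in the Riemannian product $S\times\mathbb{R}^{n-2}$, where $S$ is the following surface. Let $\alpha(s)$, $s>0$, be the (unique up to rigid motions) arc-length parametrized curve in $\mathbb{R}^3$ with curvature and torsion $$\kappa(s)=\frac{\sqrt{5}}{s},\qquad \tau(s)=\frac{3\sqrt{7}}{2s},$$ let $N(s)$ be its principal unit normal, and let $S$ be (locally, where this map is an immersion) the ruled surface in $\mathbb{R}^3$ parametrized by $x(s,t)=\alpha(s)+tN(s)$, with the metric induced from $\mathbb{R}^3$.
   Context: Let $\gamma:I\to M$ be an arc-length parametrized curve in a Riemannian manifold $M$ with Levi-Civita connection $\nabla$, unit tangent $T=\gamma'$, and curvature tensor $R^M(X,Y)=\nabla_X\nabla_Y-\nabla_Y\nabla_X-\nabla_{[X,Y]}$. The curve is called triharmonic if $$\nabla_T^5T+R^M(\nabla_T^3T,T)T-R^M(\nabla_T^2T,\nabla_TT)T=0.$$ The curvature of $\gamma$ is $\kappa=\lVert\nabla_TT\rVert$. For a curve in $\mathbb{R}^3$ with nonvanishing curvature, the Frenet frame is $T=\alpha'$, $N=\alpha''/\kappa$, $B=T\times N$, and torsion is defined by the usual Frenet equations. *)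

theory Defs
  imports "HOL-Analysis.Analysis"
begin

text \<open>Points of coordinate space R^m are functions p :: nat => real (only coordinates
  0..m-1 matter); a metric in coordinates is g p i j (i, j < m).\<close>

type_synonym cpoint = "nat \<Rightarrow> real"
type_synonym cmetric = "cpoint \<Rightarrow> nat \<Rightarrow> nat \<Rightarrow> real"

definition pd :: "nat \<Rightarrow> (cpoint \<Rightarrow> real) \<Rightarrow> cpoint \<Rightarrow> real" where
  "pd k f p = vector_derivative (\<lambda>h. f (p(k := h))) (at (p k))"

definition christ1 :: "cmetric \<Rightarrow> nat \<Rightarrow> nat \<Rightarrow> nat \<Rightarrow> cpoint \<Rightarrow> real" where
  "christ1 g i j l p =
     (pd i (\<lambda>q. g q j l) p + pd j (\<lambda>q. g q i l) p - pd l (\<lambda>q. g q i j) p) / 2"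

text \<open>Christoffel symbols of the second kind: christ g m i j p l = Gamma^l_{ij}(p),
  i.e. the solution w of  sum_k g_{lk} w^k = Gamma_{ij,l}  (this is g^{lk} Gamma_{ij,k}).\<close>
definition christ :: "cmetric \<Rightarrow> nat \<Rightarrow> nat \<Rightarrow> nat \<Rightarrow> cpoint \<Rightarrow> nat \<Rightarrow> real" where
  "christ g m i j p = (THE w. (\<forall>l. m \<le> l \<longrightarrow> w l = 0) \<and>
      (\<forall>l<m. (\<Sum>k<m. g p l k * w k) = christ1 g i j l p))"

definition ginner :: "cmetric \<Rightarrow> nat \<Rightarrow> cpoint \<Rightarrow> cpoint \<Rightarrow> cpoint \<Rightarrow> real" where
  "ginner g m p X Y = (\<Sum>i<m. \<Sum>j<m. g p i j * X i * Y j)"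

text \<open>Riemann curvature tensor R(X,Y)Z = nabla_X nabla_Y Z - nabla_Y nabla_X Z - nabla_[X,Y] Z
  in coordinates: (R(X,Y)Z)^l = X^i Y^j Z^k R^l_{ijk},
  R^l_{ijk} = d_i Gamma^l_{jk} - d_j Gamma^l_{ik} + Gamma^l_{iq} Gamma^q_{jk} - Gamma^l_{jq} Gamma^q_{ik}.\<close>
definition riem :: "cmetric \<Rightarrow> nat \<Rightarrow> cpoint \<Rightarrow> cpoint \<Rightarrow> cpoint \<Rightarrow> cpoint \<Rightarrow> cpoint" where
  "riem g m p X Y Z = (\<lambda>l. if l < m then
     (\<Sum>i<m. \<Sum>j<m. \<Sum>k<m. X i * Y j * Z k *
        (pd i (\<lambda>q. christ g m j k q l) p - pd j (\<lambda>q. christ g m i k q l) p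
         + (\<Sum>r<m. christ g m i r p l * christ g m j k p r
                   - christ g m j r p l * christ g m i k p r)))
     else 0)"

definition cvel :: "nat \<Rightarrow> (real \<Rightarrow> cpoint) \<Rightarrow> real \<Rightarrow> cpoint" where
  "cvel m c u = (\<lambda>i. if i < m then vector_derivative (\<lambda>v. c v i) (at u) else 0)"

definition cov :: "cmetric \<Rightarrow> nat \<Rightarrow> (real \<Rightarrow> cpoint) \<Rightarrow> (real \<Rightarrow> cpoint) \<Rightarrow> real \<Rightarrow> cpoint" where
  "cov g m c V u = (\<lambda>l. if l < m then
     vector_derivative (\<lambda>v. V v l) (at u)
     + (\<Sum>i<m. \<Sum>j<m. christ g m i j (c u) l * cvel m c u i * V u j)
     else 0)"

definition smooth_on :: "real set \<Rightarrow> (real \<Rightarrow> real) \<Rightarrow> bool" where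
  "smooth_on I f \<longleftrightarrow> (\<forall>k. \<forall>u\<in>I. (deriv ^^ k) f differentiable (at u))"

definition smooth_curve :: "nat \<Rightarrow> real set \<Rightarrow> (real \<Rightarrow> cpoint) \<Rightarrow> bool" where
  "smooth_curve m I c \<longleftrightarrow> (\<forall>i<m. smooth_on I (\<lambda>u. c u i))"

definition arclength :: "cmetric \<Rightarrow> nat \<Rightarrow> real set \<Rightarrow> (real \<Rightarrow> cpoint) \<Rightarrow> bool" where
  "arclength g m I c \<longleftrightarrow> (\<forall>u\<in>I. ginner g m (c u) (cvel m c u) (cvel m c u) = 1)"

definition triharmonic :: "cmetric \<Rightarrow> nat \<Rightarrow> real set \<Rightarrow> (real \<Rightarrow> cpoint) \<Rightarrow> bool" where
  "triharmonic g m I c \<longleftrightarrow>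
     (let T = cvel m c; D = (\<lambda>k. (cov g m c ^^ k) T) in
      \<forall>u\<in>I. \<forall>l<m.
        D 5 u l + riem g m (c u) (D 3 u) (T u) (T u) l
                - riem g m (c u) (D 2 u) (D 1 u) (T u) l = 0)"

definition geod_curvature :: "cmetric \<Rightarrow> nat \<Rightarrow> (real \<Rightarrow> cpoint) \<Rightarrow> real \<Rightarrow> real" where
  "geod_curvature g m c u =
     sqrt (ginner g m (c u) (cov g m c (cvel m c) u) (cov g m c (cvel m c) u))"

definition surf_partial :: "(real \<Rightarrow> real \<Rightarrow> real^3) \<Rightarrow> nat \<Rightarrow> cpoint \<Rightarrow> real^3" where
  "surf_partial x k p = (if k = 0 then vector_derivative (\<lambda>s. x s (p 1)) (at (p 0))
                         else vector_derivative (\<lambda>t. x (p 0) t) (at (p 1)))"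

text \<open>Riemannian product metric of the induced metric of x (coordinates 0,1) with the
  flat metric of R^(n-2) (coordinates 2..n-1).\<close>
definition prod_metric :: "(real \<Rightarrow> real \<Rightarrow> real^3) \<Rightarrow> cmetric" where
  "prod_metric x p i j =
     (if i < 2 \<and> j < 2 then inner (surf_partial x i p) (surf_partial x j p)
      else if i = j then 1 else 0)"

end

theory Submission imports Defs begin

definition Ef :: "real \<Rightarrow> real \<Rightarrow> real" where
  "Ef s t = (1 - sqrt 5 * t / s)^2 + 63/4 * (t/s)^2"
definition Es :: "real \<Rightarrow> real \<Rightarrow> real" where
  "Es s t = 2 * (1 - sqrt 5 * t / s) * (sqrt 5 * t / s^2) - 63/2 * t^2 / s^3"
definition Et :: "real \<Rightarrow> real \<Rightarrow> real" where
  "Et s t = 2 * (1 - sqrt 5 * t / s) * (- sqrt 5 / s) + 63/2 * t / s^2"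

lemma Ef_pos: "s \<noteq> 0 \<Longrightarrow> Ef s t > 0"
proof -
  assume s: "s \<noteq> 0"
  show ?thesis
  proof (cases "t = 0")
    case True thus ?thesis by (simp add: Ef_def)
  next
    case False
    hence "(t/s)^2 > 0" using s by simp
    moreover have "(1 - sqrt 5 * t / s)^2 \<ge> 0" by simp
    ultimately show ?thesis unfolding Ef_def by linarith
  qed
qed

lemma Ef_0 [simp]: "Ef s 0 = 1" by (simp add: Ef_def)
lemma Es_0 [simp]: "Es s 0 = 0" by (simp add: Es_def)
lemma Et_0: "Et s 0 = - 2 * sqrt 5 / s" by (simp add: Et_def)

lemma Ef_ds: "s \<noteq> 0 \<Longrightarrow> ((\<lambda>h. Ef h t) has_real_derivative Es s t) (at s)"
  unfolding Ef_def Es_def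
  apply (auto intro!: derivative_eq_intros)
  apply (simp add: field_simps eval_nat_numeral)
  done

lemma Ef_dt: "s \<noteq> 0 \<Longrightarrow> ((\<lambda>h. Ef s h) has_real_derivative Et s t) (at t)"
  unfolding Ef_def Et_def
  apply (auto intro!: derivative_eq_intros)
  apply (simp add: field_simps eval_nat_numeral)
  done

lemma G000_dt: "s \<noteq> 0 \<Longrightarrow> ((\<lambda>h. Es s h / (2 * Ef s h)) has_real_derivative sqrt 5 / s^2) (at 0)"
proof -
  assume s: "s \<noteq> 0"
  have d1: "((\<lambda>h. Es s h) has_real_derivative 2 * sqrt 5 / s^2) (at 0)"
    unfolding Es_def
    using s apply (auto intro!: derivative_eq_intros)
    apply (simp add: field_simps eval_nat_numeral)
    done
  have d2: "((\<lambda>h. 2 * Ef s h) has_real_derivative 2 * Et s 0) (at 0)"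
    using DERIV_cmult[OF Ef_dt[OF s, of 0], of 2] by simp
  have "((\<lambda>h. Es s h / (2 * Ef s h)) has_real_derivative
     (2 * sqrt 5 / s^2 * (2 * Ef s 0) - Es s 0 * (2 * Et s 0)) / (2 * Ef s 0 * (2 * Ef s 0))) (at 0)"
    by (rule DERIV_divide[OF d1 d2]) simp
  thus ?thesis by simp
qed

lemma G100_dt: "s \<noteq> 0 \<Longrightarrow> ((\<lambda>h. - Et s h / 2) has_real_derivative - 83 / (4 * s^2)) (at 0)"
  unfolding Et_def
  apply (auto intro!: derivative_eq_intros)
  apply (simp add: field_simps eval_nat_numeral)
  done

lemma G010_ds: "s \<noteq> 0 \<Longrightarrow> ((\<lambda>h. Et h 0 / (2 * Ef h 0)) has_real_derivative sqrt 5 / s^2) (at s)"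
  unfolding Et_0 Ef_0
  apply (auto intro!: derivative_eq_intros)
  apply (simp add: field_simps eval_nat_numeral)
  done


definition dG :: "nat \<Rightarrow> nat \<Rightarrow> nat \<Rightarrow> real \<Rightarrow> real \<Rightarrow> real" where
  "dG k i j s t = (if i = 0 \<and> j = 0 then (if k = 0 then Es s t else if k = 1 then Et s t else 0) else 0)"

definition Gam :: "real \<Rightarrow> real \<Rightarrow> nat \<Rightarrow> nat \<Rightarrow> nat \<Rightarrow> real" where
  "Gam s t i j l = (dG i j l s t + dG j i l s t - dG l i j s t) / 2 / (if l = 0 then Ef s t else 1)"

definition c0 :: "real \<Rightarrow> cpoint" where "c0 u = (\<lambda>i. if i = 0 then u else 0)"
definition mk :: "real \<Rightarrow> real \<Rightarrow> cpoint" where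
  "mk a b = (\<lambda>i. if i = 0 then a else if i = 1 then b else 0)"

lemma pd_at:
  assumes "open S" "p k \<in> S" "\<And>h. h \<in> S \<Longrightarrow> f (p(k:=h)) = F h"
    "(F has_real_derivative D) (at (p k))"
  shows "pd k f p = D"
  unfolding pd_def
  apply (rule vector_derivative_at)
  apply (rule has_vector_derivative_transform_within_open[of F _ _ S])
  using assms by (auto simp: has_real_derivative_iff_has_vector_derivative)

lemma Gam_alt: "Gam s t i j l = (if l = 0 \<and> i = 0 \<and> j = 0 then Es s t / (2 * Ef s t)
  else if l = 0 \<and> (i = 0 \<and> j = 1 \<or> i = 1 \<and> j = 0) then Et s t / (2 * Ef s t)
  else if l = 1 \<and> i = 0 \<and> j = 0 then - Et s t / 2 else 0)"
  by (auto simp: Gam_def dG_def)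

lemma sum_first2:
  fixes m :: nat and f :: "nat \<Rightarrow> 'b::comm_monoid_add"
  assumes "2 \<le> m" "\<And>r. 2 \<le> r \<Longrightarrow> r < m \<Longrightarrow> f r = 0"
  shows "(\<Sum>r<m. f r) = f 0 + f 1"
proof -
  define k where "k = m - 2"
  have k: "m = k + 2" using assms(1) unfolding k_def by simp
  have "(\<Sum>r<k+2. f r) = f 0 + f 1" using assms(2)[unfolded k]
  proof (induction k)
    case 0 thus ?case by (simp add: numeral_2_eq_2)
  next
    case (Suc k)
    have "(\<Sum>r<Suc k+2. f r) = (\<Sum>r<k+2. f r) + f (k+2)" by simp
    also have "f (k+2) = 0" using Suc.prems by simp
    finally show ?case using Suc by simp
  qed
  thus ?thesis using k by simp
qed

lemma sum3:
  fixes m :: nat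
  assumes "2 \<le> m"
  shows "(\<Sum>i<m. \<Sum>j<m. \<Sum>k<m. mk a0 a1 i * mk b0 b1 j * mk d0 d1 k * F i j k) =
    a0 * b0 * d0 * F 0 0 0 + a0 * b0 * d1 * F 0 0 1 + a0 * b1 * d0 * F 0 1 0 + a0 * b1 * d1 * F 0 1 1 +
    a1 * b0 * d0 * F 1 0 0 + a1 * b0 * d1 * F 1 0 1 + a1 * b1 * d0 * F 1 1 0 + a1 * b1 * d1 * F 1 1 1"
proof -
  have s1: "(\<Sum>k<m. mk a0 a1 i * mk b0 b1 j * mk d0 d1 k * F i j k) =
     mk a0 a1 i * mk b0 b1 j * d0 * F i j 0 + mk a0 a1 i * mk b0 b1 j * d1 * F i j 1" for i j
    by (rule trans[OF sum_first2[OF assms]]) (auto simp: mk_def)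
  have s2: "(\<Sum>j<m. mk a0 a1 i * mk b0 b1 j * d0 * F i j 0 + mk a0 a1 i * mk b0 b1 j * d1 * F i j 1) =
     (mk a0 a1 i * b0 * d0 * F i 0 0 + mk a0 a1 i * b0 * d1 * F i 0 1) +
     (mk a0 a1 i * b1 * d0 * F i 1 0 + mk a0 a1 i * b1 * d1 * F i 1 1)" for i
    by (rule trans[OF sum_first2[OF assms]]) (auto simp: mk_def)
  show ?thesis unfolding s1 s2
    by (rule trans[OF sum_first2[OF assms]]) (auto simp: mk_def algebra_simps)
qed

locale fr =
  fixes \<alpha> T N B :: "real \<Rightarrow> real^3"
  assumes frenet: "\<forall>s>0.
        (\<alpha> has_vector_derivative T s) (at s) \<and> norm (T s) = 1 \<and>
        (T has_vector_derivative ((sqrt 5 / s) *\<^sub>R N s)) (at s) \<and> norm (N s) = 1 \<and>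
        B s = cross3 (T s) (N s) \<and>
        (N has_vector_derivative
            (- (sqrt 5 / s) *\<^sub>R T s + (3 * sqrt 7 / (2 * s)) *\<^sub>R B s)) (at s)"
begin

abbreviation gg where "gg \<equiv> prod_metric (\<lambda>s t. \<alpha> s + t *\<^sub>R N s)"

lemma TT: "s > 0 \<Longrightarrow> inner (T s) (T s) = 1"
  using frenet by (metis power2_norm_eq_inner power_one)
lemma NN: "s > 0 \<Longrightarrow> inner (N s) (N s) = 1"
  using frenet by (metis power2_norm_eq_inner power_one)

lemma TN: assumes s: "s > 0" shows "inner (T s) (N s) = 0"
proof -
  have dT: "(T has_vector_derivative ((sqrt 5 / s) *\<^sub>R N s)) (at s)" using frenet s by blast
  have d1: "((\<lambda>x. inner (T x) (T x)) has_real_derivative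
      (inner (T s) ((sqrt 5 / s) *\<^sub>R N s) + inner ((sqrt 5 / s) *\<^sub>R N s) (T s))) (at s)"
    unfolding has_real_derivative_iff_has_vector_derivative
    by (rule bounded_bilinear.has_vector_derivative[OF bounded_bilinear_inner dT dT])
  have d2: "((\<lambda>x. inner (T x) (T x)) has_real_derivative 0) (at s)"
    by (rule has_field_derivative_transform_within_open[of "\<lambda>x. 1" _ _ "{0<..}"])
       (use s TT in auto)
  have "inner (T s) ((sqrt 5 / s) *\<^sub>R N s) + inner ((sqrt 5 / s) *\<^sub>R N s) (T s) = 0"
    using DERIV_unique[OF d1 d2] .
  hence "2 * (sqrt 5 / s) * inner (T s) (N s) = 0"
    by (simp add: inner_commute)
  thus ?thesis using s by simp
qed

lemma TB: "s > 0 \<Longrightarrow> inner (T s) (B s) = 0"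
  using frenet dot_cross_self by metis
lemma NB: "s > 0 \<Longrightarrow> inner (N s) (B s) = 0"
  using frenet dot_cross_self inner_commute by metis
lemma BB: assumes s: "s > 0" shows "inner (B s) (B s) = 1"
proof -
  have "(norm (B s))^2 + (inner (T s) (N s))^2 = (norm (T s) * norm (N s))^2"
    using frenet s norm_cross_dot by metis
  hence "(norm (B s))^2 = 1" using TN[OF s] frenet s by simp
  thus ?thesis by (simp add: power2_norm_eq_inner)
qed

lemma sp0: assumes "q 0 > 0"
  shows "surf_partial (\<lambda>s t. \<alpha> s + t *\<^sub>R N s) 0 q =
     T (q 0) + q 1 *\<^sub>R (- (sqrt 5 / q 0) *\<^sub>R T (q 0) + (3 * sqrt 7 / (2 * q 0)) *\<^sub>R B (q 0))"
proof -
  have "((\<lambda>s. \<alpha> s + q 1 *\<^sub>R N s) has_vector_derivative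
     (T (q 0) + q 1 *\<^sub>R (- (sqrt 5 / q 0) *\<^sub>R T (q 0) + (3 * sqrt 7 / (2 * q 0)) *\<^sub>R B (q 0)))) (at (q 0))"
    using frenet assms by (auto intro!: derivative_eq_intros)
  thus ?thesis unfolding surf_partial_def by (simp add: vector_derivative_at)
qed

lemma sp1: "surf_partial (\<lambda>s t. \<alpha> s + t *\<^sub>R N s) 1 q = N (q 0)"
proof -
  have "((\<lambda>t. \<alpha> (q 0) + t *\<^sub>R N (q 0)) has_vector_derivative N (q 0)) (at (q 1))"
    by (auto intro!: derivative_eq_intros)
  thus ?thesis unfolding surf_partial_def by (simp add: vector_derivative_at)
qed

lemma metric: assumes q: "q 0 > 0"
  shows "gg q i j = (if i = j then (if i = 0 then Ef (q 0) (q 1) else 1) else 0)"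
proof -
  let ?s = "q 0" and ?t = "q 1"
  have o: "inner (T ?s) (T ?s) = 1" "inner (N ?s) (N ?s) = 1" "inner (B ?s) (B ?s) = 1"
    "inner (T ?s) (N ?s) = 0" "inner (N ?s) (T ?s) = 0" "inner (T ?s) (B ?s) = 0"
    "inner (B ?s) (T ?s) = 0" "inner (N ?s) (B ?s) = 0" "inner (B ?s) (N ?s) = 0"
    using TT NN BB TN TB NB q inner_commute by metis+
  have v: "T ?s + ?t *\<^sub>R (- (sqrt 5 / ?s) *\<^sub>R T ?s + (3 * sqrt 7 / (2 * ?s)) *\<^sub>R B ?s)
      = (1 - ?t * (sqrt 5 / ?s)) *\<^sub>R T ?s + (?t * (3 * sqrt 7 / (2 * ?s))) *\<^sub>R B ?s"
    by (simp add: scaleR_add_right scaleR_diff_left scaleR_diff_right)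
  have w: "inner ((a::real) *\<^sub>R T ?s + b *\<^sub>R B ?s) (a *\<^sub>R T ?s + b *\<^sub>R B ?s) = a^2 + b^2" for a b
    by (simp add: inner_add_left inner_add_right o power2_eq_square)
  have ef: "(1 - ?t * (sqrt 5 / ?s))^2 + (?t * (3 * sqrt 7 / (2 * ?s)))^2 = Ef ?s ?t"
    unfolding Ef_def power_mult_distrib by (simp add: power_divide power_mult_distrib mult.commute)
  have e00: "inner (surf_partial (\<lambda>s t. \<alpha> s + t *\<^sub>R N s) 0 q) (surf_partial (\<lambda>s t. \<alpha> s + t *\<^sub>R N s) 0 q)
     = Ef ?s ?t"
    unfolding sp0[of q, OF q] v w ef ..
  have e01: "inner (surf_partial (\<lambda>s t. \<alpha> s + t *\<^sub>R N s) 0 q) (surf_partial (\<lambda>s t. \<alpha> s + t *\<^sub>R N s) 1 q) = 0"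
    unfolding sp0[of q, OF q] sp1 v
    by (simp add: inner_add_left o)
  have e10: "inner (surf_partial (\<lambda>s t. \<alpha> s + t *\<^sub>R N s) 1 q) (surf_partial (\<lambda>s t. \<alpha> s + t *\<^sub>R N s) 0 q) = 0"
    by (subst inner_commute) (rule e01)
  have e11: "inner (surf_partial (\<lambda>s t. \<alpha> s + t *\<^sub>R N s) 1 q) (surf_partial (\<lambda>s t. \<alpha> s + t *\<^sub>R N s) 1 q) = 1"
    unfolding sp1 using o by simp
  show ?thesis
    unfolding prod_metric_def
    by (cases "i = 0"; cases "j = 0"; cases "i = 1"; cases "j = 1") (simp_all add: e00 e01[simplified] e10[simplified] e11[simplified])
qed


lemma pd_metric: assumes q: "q 0 > 0"
  shows "pd k (\<lambda>q. gg q i j) q = dG k i j (q 0) (q 1)"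
proof -
  consider "k = 0" | "k = 1" | "k \<ge> 2" by linarith
  thus ?thesis
  proof cases
    case 1
    show ?thesis
      apply (rule pd_at[of "{0<..}" q k _ "\<lambda>h. (if i = j then (if i = 0 then Ef h (q 1) else 1) else 0)"])
      using q 1 apply (simp_all add: metric dG_def)
      using Ef_ds[of "q 0" "q 1"] by (cases "i = j"; cases "i = 0") auto
  next
    case 2
    show ?thesis
      apply (rule pd_at[of "UNIV" q k _ "\<lambda>h. (if i = j then (if i = 0 then Ef (q 0) h else 1) else 0)"])
      using q 2 apply (simp_all add: metric dG_def)
      using Ef_dt[of "q 0" "q 1"] by (cases "i = j"; cases "i = 0") auto
  next
    case 3
    show ?thesis
      apply (rule pd_at[of "UNIV" q k _ "\<lambda>h. (if i = j then (if i = 0 then Ef (q 0) (q 1) else 1) else 0)"])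
      using q 3 by (simp_all add: metric dG_def)
  qed
qed

lemma christ_eq: assumes q: "q 0 > 0" and l: "l < m"
  shows "christ gg m i j q l = Gam (q 0) (q 1) i j l"
proof -
  let ?W = "\<lambda>l. if l < m then christ1 gg i j l q / gg q l l else 0"
  have nz: "gg q l l \<noteq> 0" for l using q Ef_pos[of "q 0" "q 1"] by (simp add: metric)
  have sm: "(\<Sum>k<m. gg q l k * w k) = (if l < m then gg q l l * w l else 0)" for l w
  proof -
    have "gg q l k * w k = (if k = l then gg q l l * w l else 0)" for k
      using q by (simp add: metric)
    hence "(\<Sum>k<m. gg q l k * w k) = (\<Sum>k<m. if k = l then gg q l l * w l else 0)" by simp
    thus ?thesis by simp
  qed
  have "christ gg m i j q = ?W"
    unfolding christ_def
  proof (rule the_equality)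
    show "(\<forall>l. m \<le> l \<longrightarrow> ?W l = 0) \<and> (\<forall>l<m. (\<Sum>k<m. gg q l k * ?W k) = christ1 gg i j l q)"
    proof (intro conjI allI impI)
      fix l assume l: "l < m"
      have "(\<Sum>k<m. gg q l k * ?W k) = gg q l l * ?W l" using sm[of l ?W] l by presburger
      thus "(\<Sum>k<m. gg q l k * ?W k) = christ1 gg i j l q" using l nz[of l] by simp
    qed simp
  next
    fix w assume w: "(\<forall>l. m \<le> l \<longrightarrow> w l = 0) \<and> (\<forall>l<m. (\<Sum>k<m. gg q l k * w k) = christ1 gg i j l q)"
    show "w = ?W"
    proof
      fix l show "w l = ?W l"
      proof (cases "l < m")
        case True
        have "gg q l l * w l = christ1 gg i j l q" using w True sm[of l w] by presburger
        thus ?thesis using True nz[of l] by (simp add: field_simps)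
      qed (use w in simp)
    qed
  qed
  thus ?thesis using l q
    by (simp add: christ1_def pd_metric Gam_def metric)
qed


lemma c0_pos: "u > 0 \<Longrightarrow> c0 u 0 > 0" by (simp add: c0_def)

lemma pdA: assumes u: "u > 0" and l: "l < m"
  shows "pd 1 (\<lambda>q. christ gg m 0 0 q l) (c0 u) =
    (if l = 0 then sqrt 5 / u^2 else if l = 1 then - 83 / (4 * u^2) else 0)"
  apply (rule pd_at[of UNIV _ _ _ "\<lambda>h. Gam u h 0 0 l"])
  using u l apply (simp_all add: christ_eq c0_def)
  using G000_dt[of u] G100_dt[of u] u by (auto simp: Gam_alt)

lemma pdB: assumes u: "u > 0" and l: "l < m"
  shows "pd 0 (\<lambda>q. christ gg m 1 0 q l) (c0 u) = (if l = 0 then sqrt 5 / u^2 else 0)"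
  apply (rule pd_at[of "{0<..}" _ _ _ "\<lambda>h. Gam h 0 1 0 l"])
  using u l apply (simp_all add: christ_eq c0_def)
  using G010_ds[of u] u by (auto simp: Gam_alt)

lemma christ_c0: "u > 0 \<Longrightarrow> l < m \<Longrightarrow> christ gg m i j (c0 u) l = Gam u 0 i j l"
  using christ_eq[of "c0 u" l m i j] by (simp add: c0_def)

lemma sumr: assumes u: "u > 0" and m: "2 \<le> m" and l: "l < m"
  shows "(\<Sum>r<m. christ gg m i r (c0 u) l * christ gg m j k (c0 u) r
                   - christ gg m j r (c0 u) l * christ gg m i k (c0 u) r) =
     Gam u 0 i 0 l * Gam u 0 j k 0 - Gam u 0 j 0 l * Gam u 0 i k 0 +
     (Gam u 0 i 1 l * Gam u 0 j k 1 - Gam u 0 j 1 l * Gam u 0 i k 1)"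
  apply (rule trans[OF sum_first2[OF m]])
  using u l m by (auto simp: christ_c0 Gam_alt)

lemma riem_c0: assumes u: "u > 0" and m: "2 \<le> m"
  shows "riem gg m (c0 u) (mk x0 x1) (mk y0 y1) (mk 1 0) = mk 0 ((x1*y0 - x0*y1) * (-63/(4*u^2)))"
proof
  fix l
  show "riem gg m (c0 u) (mk x0 x1) (mk y0 y1) (mk 1 0) l = mk 0 ((x1*y0 - x0*y1) * (-63/(4*u^2))) l"
  proof (cases "l < m")
    case False thus ?thesis using m by (simp add: riem_def mk_def)
  next
    case l: True
    have "riem gg m (c0 u) (mk x0 x1) (mk y0 y1) (mk 1 0) l =
      x0 * y1 * (pd 0 (\<lambda>q. christ gg m 1 0 q l) (c0 u) - pd 1 (\<lambda>q. christ gg m 0 0 q l) (c0 u)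
         + (Gam u 0 0 0 l * Gam u 0 1 0 0 - Gam u 0 1 0 l * Gam u 0 0 0 0 +
     (Gam u 0 0 1 l * Gam u 0 1 0 1 - Gam u 0 1 1 l * Gam u 0 0 0 1))) +
      x1 * y0 * (pd 1 (\<lambda>q. christ gg m 0 0 q l) (c0 u) - pd 0 (\<lambda>q. christ gg m 1 0 q l) (c0 u)
         + (Gam u 0 1 0 l * Gam u 0 0 0 0 - Gam u 0 0 0 l * Gam u 0 1 0 0 +
     (Gam u 0 1 1 l * Gam u 0 0 0 1 - Gam u 0 0 1 l * Gam u 0 1 0 1)))"
      unfolding riem_def using l
      apply (simp only: if_True sum3[OF m] sumr[OF u m l])
      apply (simp add: algebra_simps)
      done
    also have "\<dots> = mk 0 ((x1*y0 - x0*y1) * (-63/(4*u^2))) l"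
      using u l
      apply (simp only: pdA[OF u l] pdB[OF u l])
      apply (simp add: Gam_alt Et_0 mk_def)
      apply (simp add: field_simps power2_eq_square)
      done
    finally show ?thesis .
  qed
qed


end


lemma dpow: "u \<noteq> 0 \<Longrightarrow> ((\<lambda>v::real. c / v^n) has_real_derivative (- (real n) * c / u^(Suc n))) (at u)"
  apply (auto intro!: derivative_eq_intros)
  apply (cases n) apply (simp_all add: field_simps)
  done

lemma s5 [simp]: "sqrt 5 * (sqrt 5 * x) = 5 * x" "sqrt 5 * sqrt 5 = 5"
  by (simp_all add: mult.assoc[symmetric])

lemma fpS: "(f ^^ Suc k) x = f ((f ^^ k) x)" by simp

lemma deriv_const_pow: "\<exists>c'. (deriv ^^ k) (\<lambda>z::real. c) = (\<lambda>z. c')"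
proof (induction k arbitrary: c)
  case 0 thus ?case by auto
next
  case (Suc k)
  have "(deriv ^^ Suc k) (\<lambda>z::real. c) = (deriv ^^ k) (\<lambda>z. 0)"
    by (simp only: funpow_Suc_right comp_def deriv_const)
  thus ?case using Suc.IH[of 0] by simp
qed

lemma smooth_const: "smooth_on I (\<lambda>z::real. c)"
  unfolding smooth_on_def
proof (intro allI ballI)
  fix k u
  obtain c' where "(deriv ^^ k) (\<lambda>z::real. c) = (\<lambda>z. c')" using deriv_const_pow by blast
  thus "(deriv ^^ k) (\<lambda>z::real. c) differentiable (at u)" by simp
qed

lemma smooth_id: "smooth_on I (\<lambda>z::real. z)"
  unfolding smooth_on_def
proof (intro allI ballI)
  fix k u
  show "(deriv ^^ k) (\<lambda>z::real. z) differentiable (at u)"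
  proof (cases k)
    case 0 thus ?thesis by simp
  next
    case (Suc k')
    obtain c' where "(deriv ^^ k') (\<lambda>z::real. 1) = (\<lambda>z. c')" using deriv_const_pow by blast
    hence "(deriv ^^ k) (\<lambda>z::real. z) = (\<lambda>z. c')"
      unfolding Suc by (simp only: funpow_Suc_right comp_def deriv_ident)
    thus ?thesis by simp
  qed
qed

lemma smooth_c0: "smooth_curve m I c0"
  unfolding smooth_curve_def
proof (intro allI impI)
  fix i assume "i < m"
  show "smooth_on I (\<lambda>u. c0 u i)"
    by (cases "i = 0") (simp_all add: c0_def smooth_id smooth_const)
qed

context fr begin

lemma cvel_c0: assumes m: "2 \<le> m" shows "cvel m c0 u = mk 1 0"
proof (rule ext)
  fix i
  have "((\<lambda>v. c0 v i) has_vector_derivative (if i = 0 then 1 else 0)) (at u)"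
    by (cases "i = 0") (auto simp: c0_def)
  hence "vector_derivative (\<lambda>v. c0 v i) (at u) = (if i = 0 then 1 else 0)"
    by (rule vector_derivative_at)
  thus "cvel m c0 u i = mk 1 0 i" using m by (cases "i = 0") (auto simp: cvel_def mk_def)
qed

lemma cov_step:
  assumes m: "2 \<le> m" and u: "u > 0" and V: "\<And>v. v > 0 \<Longrightarrow> V v = mk (a v) (b v)"
    and da: "(a has_real_derivative a') (at u)" and db: "(b has_real_derivative b') (at u)"
  shows "cov gg m c0 V u = mk (a' - sqrt 5 / u * b u) (b' + sqrt 5 / u * a u)"
proof
  fix l
  have d0: "((\<lambda>v. mk (a v) (b v) l) has_vector_derivative (if l = 0 then a' else if l = 1 then b' else 0)) (at u)"
    using da db by (auto simp: mk_def has_real_derivative_iff_has_vector_derivative)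
  have d1: "((\<lambda>v. V v l) has_vector_derivative (if l = 0 then a' else if l = 1 then b' else 0)) (at u)"
    by (rule has_vector_derivative_transform_within_open[OF d0, of "{0<..}"]) (simp_all add: u V)
  have vd: "vector_derivative (\<lambda>v. V v l) (at u) = (if l = 0 then a' else if l = 1 then b' else 0)"
    by (rule vector_derivative_at[OF d1])
  show "cov gg m c0 V u l = mk (a' - sqrt 5 / u * b u) (b' + sqrt 5 / u * a u) l"
  proof (cases "l < m")
    case False thus ?thesis using m by (simp add: cov_def mk_def)
  next
    case l: True
    have s: "(\<Sum>i<m. \<Sum>j<m. christ gg m i j (c0 u) l * cvel m c0 u i * V u j) =
       Gam u 0 0 0 l * a u + Gam u 0 0 1 l * b u"
    proof -
      have inner: "(\<Sum>j<m. christ gg m i j (c0 u) l * mk 1 0 i * mk (a u) (b u) j) =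
          christ gg m i 0 (c0 u) l * mk 1 0 i * a u + christ gg m i 1 (c0 u) l * mk 1 0 i * b u" for i
        by (rule trans[OF sum_first2[OF m]]) (simp_all add: mk_def)
      have "(\<Sum>i<m. \<Sum>j<m. christ gg m i j (c0 u) l * cvel m c0 u i * V u j) =
         (\<Sum>i<m. christ gg m i 0 (c0 u) l * mk 1 0 i * a u + christ gg m i 1 (c0 u) l * mk 1 0 i * b u)"
        unfolding cvel_c0[OF m] V[OF u] inner ..
      also have "\<dots> = christ gg m 0 0 (c0 u) l * a u + christ gg m 0 1 (c0 u) l * b u"
        by (rule trans[OF sum_first2[OF m]]) (simp_all add: mk_def)
      finally show ?thesis using u l by (simp add: christ_c0)
    qed
    show ?thesis
      unfolding cov_def using l u
      apply (simp only: if_True s vd)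
      apply (simp add: Gam_alt Et_0 mk_def)
      done
  qed
qed

lemma D1: assumes m: "2 \<le> m" and u: "u > 0"
  shows "(cov gg m c0 ^^ 1) (cvel m c0) u = mk 0 (sqrt 5 / u)"
proof -
  have "cov gg m c0 (cvel m c0) u = mk (0 - sqrt 5 / u * 0) (0 + sqrt 5 / u * 1)"
    by (rule cov_step[OF m u, of _ "\<lambda>v. 1" "\<lambda>v. 0"]) (simp_all add: cvel_c0[OF m])
  thus ?thesis by simp
qed


lemma D1': assumes m: "2 \<le> m" and u: "u > 0"
  shows "(cov gg m c0 ^^ 1) (cvel m c0) u = mk ((0) / u^1) ((sqrt 5) / u^1)"
  using D1[OF m u] by simp

lemma D2: assumes m: "2 \<le> m" and u: "u > 0"
  shows "(cov gg m c0 ^^ 2) (cvel m c0) u = mk ((-5) / u^2) ((- sqrt 5) / u^2)"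
proof -
  have da: "((\<lambda>v. (0) / v^1) has_real_derivative (- real 1 * (0) / u^(Suc 1))) (at u)"
    by (rule dpow) (use u in simp)
  have db: "((\<lambda>v. (sqrt 5) / v^1) has_real_derivative (- real 1 * (sqrt 5) / u^(Suc 1))) (at u)"
    by (rule dpow) (use u in simp)
  have "cov gg m c0 ((cov gg m c0 ^^ 1) (cvel m c0)) u =
      mk (- real 1 * (0) / u^(Suc 1) - sqrt 5 / u * ((sqrt 5) / u^1))
         (- real 1 * (sqrt 5) / u^(Suc 1) + sqrt 5 / u * ((0) / u^1))"
    by (rule cov_step[OF m u _ da db]) (rule D1'[OF m])
  also have "\<dots> = mk ((-5) / u^2) ((- sqrt 5) / u^2)"
    using u by (simp add: field_simps eval_nat_numeral)
  finally show ?thesis by (simp add: numeral_2_eq_2)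
qed

lemma D3: assumes m: "2 \<le> m" and u: "u > 0"
  shows "(cov gg m c0 ^^ 3) (cvel m c0) u = mk ((15) / u^3) ((-3 * sqrt 5) / u^3)"
proof -
  have da: "((\<lambda>v. (-5) / v^2) has_real_derivative (- real 2 * (-5) / u^(Suc 2))) (at u)"
    by (rule dpow) (use u in simp)
  have db: "((\<lambda>v. (- sqrt 5) / v^2) has_real_derivative (- real 2 * (- sqrt 5) / u^(Suc 2))) (at u)"
    by (rule dpow) (use u in simp)
  have "cov gg m c0 ((cov gg m c0 ^^ 2) (cvel m c0)) u =
      mk (- real 2 * (-5) / u^(Suc 2) - sqrt 5 / u * ((- sqrt 5) / u^2))
         (- real 2 * (- sqrt 5) / u^(Suc 2) + sqrt 5 / u * ((-5) / u^2))"
    by (rule cov_step[OF m u _ da db]) (rule D2[OF m])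
  also have "\<dots> = mk ((15) / u^3) ((-3 * sqrt 5) / u^3)"
    using u by (simp add: field_simps eval_nat_numeral)
  finally show ?thesis using fpS[of 2 "cov gg m c0"] by simp
qed

lemma D4: assumes m: "2 \<le> m" and u: "u > 0"
  shows "(cov gg m c0 ^^ 4) (cvel m c0) u = mk ((-30) / u^4) ((24 * sqrt 5) / u^4)"
proof -
  have da: "((\<lambda>v. (15) / v^3) has_real_derivative (- real 3 * (15) / u^(Suc 3))) (at u)"
    by (rule dpow) (use u in simp)
  have db: "((\<lambda>v. (-3 * sqrt 5) / v^3) has_real_derivative (- real 3 * (-3 * sqrt 5) / u^(Suc 3))) (at u)"
    by (rule dpow) (use u in simp)
  have "cov gg m c0 ((cov gg m c0 ^^ 3) (cvel m c0)) u =
      mk (- real 3 * (15) / u^(Suc 3) - sqrt 5 / u * ((-3 * sqrt 5) / u^3))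
         (- real 3 * (-3 * sqrt 5) / u^(Suc 3) + sqrt 5 / u * ((15) / u^3))"
    by (rule cov_step[OF m u _ da db]) (rule D3[OF m])
  also have "\<dots> = mk ((-30) / u^4) ((24 * sqrt 5) / u^4)"
    using u by (simp add: field_simps eval_nat_numeral)
  finally show ?thesis using fpS[of 3 "cov gg m c0"] by simp
qed

lemma D5: assumes m: "2 \<le> m" and u: "u > 0"
  shows "(cov gg m c0 ^^ 5) (cvel m c0) u = mk ((0) / u^5) ((-126 * sqrt 5) / u^5)"
proof -
  have da: "((\<lambda>v. (-30) / v^4) has_real_derivative (- real 4 * (-30) / u^(Suc 4))) (at u)"
    by (rule dpow) (use u in simp)
  have db: "((\<lambda>v. (24 * sqrt 5) / v^4) has_real_derivative (- real 4 * (24 * sqrt 5) / u^(Suc 4))) (at u)"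
    by (rule dpow) (use u in simp)
  have "cov gg m c0 ((cov gg m c0 ^^ 4) (cvel m c0)) u =
      mk (- real 4 * (-30) / u^(Suc 4) - sqrt 5 / u * ((24 * sqrt 5) / u^4))
         (- real 4 * (24 * sqrt 5) / u^(Suc 4) + sqrt 5 / u * ((-30) / u^4))"
    by (rule cov_step[OF m u _ da db]) (rule D4[OF m])
  also have "\<dots> = mk ((0) / u^5) ((-126 * sqrt 5) / u^5)"
    using u by (simp add: field_simps eval_nat_numeral)
  finally show ?thesis using fpS[of 4 "cov gg m c0"] by simp
qed


lemma ginner_c0: assumes m: "2 \<le> m" and u: "u > 0"
  shows "ginner gg m (c0 u) (mk a b) (mk a' b') = a * a' + b * b'"
proof -
  have g: "gg (c0 u) i j = (if i = j then 1 else 0)" for i j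
    using u by (simp add: metric c0_def)
  have inner: "(\<Sum>j<m. gg (c0 u) i j * mk a b i * mk a' b' j) =
      gg (c0 u) i 0 * mk a b i * a' + gg (c0 u) i 1 * mk a b i * b'" for i
    by (rule trans[OF sum_first2[OF m]]) (simp_all add: mk_def)
  show ?thesis unfolding ginner_def inner
    by (rule trans[OF sum_first2[OF m]]) (simp_all add: mk_def g)
qed

lemma triharm: assumes m: "2 \<le> m"
  shows "triharmonic gg m {1<..<3} c0"
  unfolding triharmonic_def Let_def
proof (intro ballI allI impI)
  fix u :: real and l assume u: "u \<in> {1<..<3}" and l: "l < m"
  hence u0: "u > 0" by simp
  show "(cov gg m c0 ^^ 5) (cvel m c0) u l +
       riem gg m (c0 u) ((cov gg m c0 ^^ 3) (cvel m c0) u) (cvel m c0 u) (cvel m c0 u) l -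
       riem gg m (c0 u) ((cov gg m c0 ^^ 2) (cvel m c0) u) ((cov gg m c0 ^^ 1) (cvel m c0) u)
        (cvel m c0 u) l = 0"
    unfolding D5[OF m u0] D3[OF m u0] D2[OF m u0] D1'[OF m u0] cvel_c0[OF m] riem_c0[OF u0 m]
    using u0 by (simp add: mk_def field_simps eval_nat_numeral)
qed

lemma geod: assumes m: "2 \<le> m" and u: "u > 0"
  shows "geod_curvature gg m c0 u = sqrt (5 / u^2)"
proof -
  have "cov gg m c0 (cvel m c0) u = mk (0 / u^1) (sqrt 5 / u^1)"
    using D1'[OF m u] by simp
  thus ?thesis unfolding geod_curvature_def using ginner_c0[OF m u] u
    by (simp add: power2_eq_square)
qed

end

theorem theorem1p1:
  fixes \<alpha> T N B :: "real \<Rightarrow> real^3" and n :: nat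
  assumes "n > 1"
    and frenet: "\<forall>s>0.
        (\<alpha> has_vector_derivative T s) (at s) \<and> norm (T s) = 1 \<and>
        (T has_vector_derivative ((sqrt 5 / s) *\<^sub>R N s)) (at s) \<and> norm (N s) = 1 \<and>
        B s = cross3 (T s) (N s) \<and>
        (N has_vector_derivative
            (- (sqrt 5 / s) *\<^sub>R T s + (3 * sqrt 7 / (2 * s)) *\<^sub>R B s)) (at s)"
  shows "\<exists>a b c. a < b \<and>
     (\<forall>u\<in>{a<..<b}. c u 0 > 0) \<and>
     smooth_curve n {a<..<b} c \<and>
     arclength (prod_metric (\<lambda>s t. \<alpha> s + t *\<^sub>R N s)) n {a<..<b} c \<and>
     triharmonic (prod_metric (\<lambda>s t. \<alpha> s + t *\<^sub>R N s)) n {a<..<b} c \<and>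
     (\<exists>u1\<in>{a<..<b}. \<exists>u2\<in>{a<..<b}.
        geod_curvature (prod_metric (\<lambda>s t. \<alpha> s + t *\<^sub>R N s)) n c u1 \<noteq>
        geod_curvature (prod_metric (\<lambda>s t. \<alpha> s + t *\<^sub>R N s)) n c u2)"
proof -
  interpret fr \<alpha> T N B by (unfold_locales) (rule frenet)
  have m: "2 \<le> n" using assms(1) by simp
  have arc: "arclength gg n {1<..<3} c0"
    unfolding arclength_def
  proof
    fix u :: real assume "u \<in> {1<..<3}"
    hence u: "u > 0" by simp
    show "ginner gg n (c0 u) (cvel n c0 u) (cvel n c0 u) = 1"
      unfolding cvel_c0[OF m] ginner_c0[OF m u] by simp
  qed
  have pos: "\<forall>u\<in>{1<..<3::real}. c0 u 0 > 0" by (simp add: c0_def)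
  have ne: "geod_curvature gg n c0 (3/2) \<noteq> geod_curvature gg n c0 2"
  proof -
    have "sqrt (5 / (3/2)^2) \<noteq> sqrt (5 / (2::real)^2)" by (simp add: power2_eq_square)
    thus ?thesis using geod[OF m, of "3/2"] geod[OF m, of 2] by simp
  qed
  show ?thesis
    apply (rule exI[of _ 1], rule exI[of _ 3], rule exI[of _ c0])
    using pos smooth_c0 arc triharm[OF m] ne by force
qed

end
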